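(* Let $Q$ be a finite connected quandle and $\alpha$ a congruence of $Q$. If $Q/\alpha$ is simply connected, then $\alpha=\mathcal{O}_{\mathrm{Dis}_\alpha}$ and $\mathrm{Dis}_\alpha=\mathrm{Dis}^\alpha$.
   Context: A quandle is a set $Q$ with a binary operation $*$ such that every left translation $L_x:y\mapsto x*y$ is bijective, $x*(y*z)=(x*y)*(x*z)$ and $x*x=x$; left division is $x\backslash y=L_x^{-1}(y)$. $\mathrm{LMlt}(Q)=\langle L_x:x\in Q\rangle$; $Q$ is connected if it is transitive. A congruence is an equivalence relation compatible with $*$ and $\backslash$. For a congruence $\alpha$: $\mathrm{Dis}_\alpha=\langle L_xL_y^{-1}: x\,\alpha\,y\rangle$; $\mathrm{Dis}(Q)=\langle L_xL_y^{-1}:x,y\in Q\rangle$; $\mathrm{LMlt}^\alpha$ is the kernel of the surjective group homomorphism $\mathrm{LMlt}(Q)\to\mathrm{LMlt}(Q/\alpha)$, $L_x\mapsto L_{[x]_\alpha}$; $\mathrm{Dis}^\alpha=\mathrm{LMlt}^\alpha\cap\mathrm{Dis}(Q)$. For a normal subgroup $N$ of $\mathrm{LMlt}(Q)$, $\mathcal{O}_N=\{(x,h(x)):x\in Q,h\in N\}$ (a congruence). For a set $S$, a quandle cocycle with values in $\mathrm{Sym}_S$ is $\theta:Q\times Q\to\mathrm{Sym}_S$ with $\theta_{x*y,x*z}\theta_{x,z}=\theta_{x,y*z}\theta_{y,z}$, $\theta_{x,x}=1$; it is cohomologous to the trivial cocycle if $\theta_{x,y}=\gamma_{x*y}\gamma_y^{-1}$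 for some $\gamma:Q\to\mathrm{Sym}_S$. A quandle is simply connected if it is connected and for every set $S$ every such cocycle is cohomologous to the trivial cocycle. *)

theory Defs
  imports "HOL-Algebra.Algebra"
begin

definition quandle :: "'a set \<Rightarrow> ('a \<Rightarrow> 'a \<Rightarrow> 'a) \<Rightarrow> bool" where
  "quandle Q op \<longleftrightarrow>
     (\<forall>x\<in>Q. bij_betw (op x) Q Q) \<and>
     (\<forall>x\<in>Q. \<forall>y\<in>Q. \<forall>z\<in>Q. op x (op y z) = op (op x y) (op x z)) \<and>
     (\<forall>x\<in>Q. op x x = x)"

definition ldiv :: "'a set \<Rightarrow> ('a \<Rightarrow> 'a \<Rightarrow> 'a) \<Rightarrow> 'a \<Rightarrow> 'a \<Rightarrow> 'a" where
  "ldiv Q op x y = (THE z. z \<in> Q \<and> op x z = y)"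

definition Lt :: "'a set \<Rightarrow> ('a \<Rightarrow> 'a \<Rightarrow> 'a) \<Rightarrow> 'a \<Rightarrow> ('a \<Rightarrow> 'a)" where
  "Lt Q op x = (\<lambda>y\<in>Q. op x y)"

definition LMlt :: "'a set \<Rightarrow> ('a \<Rightarrow> 'a \<Rightarrow> 'a) \<Rightarrow> ('a \<Rightarrow> 'a) set" where
  "LMlt Q op = generate (BijGroup Q) (Lt Q op ` Q)"

definition Dis :: "'a set \<Rightarrow> ('a \<Rightarrow> 'a \<Rightarrow> 'a) \<Rightarrow> ('a \<Rightarrow> 'a) set" where
  "Dis Q op = generate (BijGroup Q)
     {Lt Q op x \<otimes>\<^bsub>BijGroup Q\<^esub> inv\<^bsub>BijGroup Q\<^esub> (Lt Q op y) | x y. x \<in> Q \<and> y \<in> Q}"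

definition connected_quandle :: "'a set \<Rightarrow> ('a \<Rightarrow> 'a \<Rightarrow> 'a) \<Rightarrow> bool" where
  "connected_quandle Q op \<longleftrightarrow> (\<forall>x\<in>Q. \<forall>y\<in>Q. \<exists>h\<in>LMlt Q op. h x = y)"

definition congruence :: "'a set \<Rightarrow> ('a \<Rightarrow> 'a \<Rightarrow> 'a) \<Rightarrow> 'a rel \<Rightarrow> bool" where
  "congruence Q op \<alpha> \<longleftrightarrow> equiv Q \<alpha> \<and>
     (\<forall>x x' y y'. (x, x') \<in> \<alpha> \<longrightarrow> (y, y') \<in> \<alpha> \<longrightarrow>
        (op x y, op x' y') \<in> \<alpha> \<and> (ldiv Q op x y, ldiv Q op x' y') \<in> \<alpha>)"

text \<open>Quotient quandle Q/alpha: carrier Q // alpha, [x]*[y] = [x*y].\<close>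
definition quot_op :: "'a set \<Rightarrow> ('a \<Rightarrow> 'a \<Rightarrow> 'a) \<Rightarrow> 'a rel \<Rightarrow> 'a set \<Rightarrow> 'a set \<Rightarrow> 'a set" where
  "quot_op Q op \<alpha> A B = \<alpha> `` {op (SOME x. x \<in> A) (SOME y. y \<in> B)}"

definition Dis_rel :: "'a set \<Rightarrow> ('a \<Rightarrow> 'a \<Rightarrow> 'a) \<Rightarrow> 'a rel \<Rightarrow> ('a \<Rightarrow> 'a) set" where
  "Dis_rel Q op \<alpha> = generate (BijGroup Q)
     {Lt Q op x \<otimes>\<^bsub>BijGroup Q\<^esub> inv\<^bsub>BijGroup Q\<^esub> (Lt Q op y) | x y. x \<in> Q \<and> y \<in> Q \<and> (x, y) \<in> \<alpha>}"

text \<open>LMlt^alpha: kernel of LMlt(Q) -> LMlt(Q/alpha), L_x |-> L_[x]. The image of h is the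
  permutation [x] |-> [h x] of Q/alpha, so h is in the kernel iff h x alpha x for all x.\<close>
definition LMlt_up :: "'a set \<Rightarrow> ('a \<Rightarrow> 'a \<Rightarrow> 'a) \<Rightarrow> 'a rel \<Rightarrow> ('a \<Rightarrow> 'a) set" where
  "LMlt_up Q op \<alpha> = {h \<in> LMlt Q op. \<forall>x\<in>Q. (h x, x) \<in> \<alpha>}"

definition Dis_up :: "'a set \<Rightarrow> ('a \<Rightarrow> 'a \<Rightarrow> 'a) \<Rightarrow> 'a rel \<Rightarrow> ('a \<Rightarrow> 'a) set" where
  "Dis_up Q op \<alpha> = LMlt_up Q op \<alpha> \<inter> Dis Q op"

definition orbit_rel :: "'a set \<Rightarrow> ('a \<Rightarrow> 'a) set \<Rightarrow> 'a rel" where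
  "orbit_rel Q N = {(x, h x) | x h. x \<in> Q \<and> h \<in> N}"

definition quandle_cocycle :: "'a set \<Rightarrow> ('a \<Rightarrow> 'a \<Rightarrow> 'a) \<Rightarrow> 's set \<Rightarrow> ('a \<Rightarrow> 'a \<Rightarrow> ('s \<Rightarrow> 's)) \<Rightarrow> bool" where
  "quandle_cocycle Q op S \<theta> \<longleftrightarrow>
     (\<forall>x\<in>Q. \<forall>y\<in>Q. \<theta> x y \<in> carrier (BijGroup S)) \<and>
     (\<forall>x\<in>Q. \<forall>y\<in>Q. \<forall>z\<in>Q.
        \<theta> (op x y) (op x z) \<otimes>\<^bsub>BijGroup S\<^esub> \<theta> x z = \<theta> x (op y z) \<otimes>\<^bsub>BijGroup S\<^esub> \<theta> y z) \<and>
     (\<forall>x\<in>Q. \<theta> x x = \<one>\<^bsub>BijGroup S\<^esub>)"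

definition cohomologous_trivial :: "'a set \<Rightarrow> ('a \<Rightarrow> 'a \<Rightarrow> 'a) \<Rightarrow> 's set \<Rightarrow> ('a \<Rightarrow> 'a \<Rightarrow> ('s \<Rightarrow> 's)) \<Rightarrow> bool" where
  "cohomologous_trivial Q op S \<theta> \<longleftrightarrow>
     (\<exists>\<gamma>. (\<forall>x\<in>Q. \<gamma> x \<in> carrier (BijGroup S)) \<and>
        (\<forall>x\<in>Q. \<forall>y\<in>Q. \<theta> x y = \<gamma> (op x y) \<otimes>\<^bsub>BijGroup S\<^esub> inv\<^bsub>BijGroup S\<^esub> (\<gamma> y)))"

text \<open>Simply connected. HOL cannot quantify over all types inside a formula, so the
  coefficient sets S range over all subsets of nat (all countable sets).\<close>
definition simply_connected :: "'a set \<Rightarrow> ('a \<Rightarrow> 'a \<Rightarrow> 'a) \<Rightarrow> bool" where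
  "simply_connected Q op \<longleftrightarrow> connected_quandle Q op \<and>
     (\<forall>(S :: nat set) \<theta>. quandle_cocycle Q op S \<theta> \<longrightarrow> cohomologous_trivial Q op S \<theta>)"

end

theory Submission
  imports Defs
begin


lemma q_bij: "quandle Q op \<Longrightarrow> x \<in> Q \<Longrightarrow> bij_betw (op x) Q Q"
  by (simp add: quandle_def)

lemma q_closed: "quandle Q op \<Longrightarrow> x \<in> Q \<Longrightarrow> y \<in> Q \<Longrightarrow> op x y \<in> Q"
  using q_bij bij_betw_apply by metis

lemma q_idem: "quandle Q op \<Longrightarrow> x \<in> Q \<Longrightarrow> op x x = x"
  by (simp add: quandle_def)

lemma q_dist: "quandle Q op \<Longrightarrow> x \<in> Q \<Longrightarrow> y \<in> Q \<Longrightarrow> z \<in> Q \<Longrightarrow> op x (op y z) = op (op x y) (op x z)"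
  by (simp add: quandle_def)

lemma ldiv_prop:
  assumes "quandle Q op" "x \<in> Q" "y \<in> Q"
  shows "ldiv Q op x y \<in> Q \<and> op x (ldiv Q op x y) = y"
proof -
  have b: "bij_betw (op x) Q Q" using q_bij[OF assms(1,2)] .
  then have "y \<in> op x ` Q" using assms(3) by (simp add: bij_betw_def)
  then obtain z where z: "z \<in> Q" "op x z = y" by blast
  have u: "\<And>w. w \<in> Q \<and> op x w = y \<Longrightarrow> w = z" using b z unfolding bij_betw_def inj_on_def by blast
  have "ldiv Q op x y = z" unfolding ldiv_def
    using the_equality[of "\<lambda>w. w \<in> Q \<and> op x w = y" z] z u by metis
  thus ?thesis using z by simp
qed

lemma ldiv_op:
  assumes "quandle Q op" "x \<in> Q" "z \<in> Q"
  shows "ldiv Q op x (op x z) = z"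
proof -
  have b: "bij_betw (op x) Q Q" using q_bij[OF assms(1,2)] .
  have "op x z \<in> Q" using q_closed[OF assms] .
  then have "ldiv Q op x (op x z) \<in> Q" "op x (ldiv Q op x (op x z)) = op x z" using ldiv_prop[OF assms(1,2)] by blast+
  thus ?thesis using b assms unfolding bij_betw_def inj_on_def by blast
qed

lemma Lt_Bij: "quandle Q op \<Longrightarrow> x \<in> Q \<Longrightarrow> Lt Q op x \<in> carrier (BijGroup Q)"
  unfolding BijGroup_def Bij_def Lt_def using q_bij
  by (auto intro: bij_betw_cong[THEN iffD1])

lemma B_mult: "f \<in> carrier (BijGroup Q) \<Longrightarrow> g \<in> carrier (BijGroup Q) \<Longrightarrow>
   f \<otimes>\<^bsub>BijGroup Q\<^esub> g = (\<lambda>x\<in>Q. f (g x))"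
  by (simp add: BijGroup_def compose_def)

lemma B_one: "\<one>\<^bsub>BijGroup Q\<^esub> = (\<lambda>x\<in>Q. x)"
  by (simp add: BijGroup_def)

lemma B_app: "f \<in> carrier (BijGroup Q) \<Longrightarrow> x \<in> Q \<Longrightarrow> f x \<in> Q"
  by (auto simp: BijGroup_def Bij_def bij_betw_def)

lemma B_inv_app:
  assumes "f \<in> carrier (BijGroup Q)" "x \<in> Q"
  shows "(inv\<^bsub>BijGroup Q\<^esub> f) x \<in> Q \<and> f ((inv\<^bsub>BijGroup Q\<^esub> f) x) = x \<and> (inv\<^bsub>BijGroup Q\<^esub> f) (f x) = x"
proof -
  have f: "f \<in> Bij Q" using assms by (simp add: BijGroup_def)
  hence b: "bij_betw f Q Q" by (simp add: Bij_def)
  have e: "inv\<^bsub>BijGroup Q\<^esub> f = (\<lambda>x \<in> Q. (inv_into Q f) x)" using inv_BijGroup[OF f] .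
  have im: "f ` Q = Q" and inj: "inj_on f Q" using b by (simp_all add: bij_betw_def)
  have fx: "f x \<in> Q" using b assms(2) bij_betw_apply by metis
  have 1: "(inv\<^bsub>BijGroup Q\<^esub> f) x = inv_into Q f x" using e assms(2) by simp
  have 2: "(inv\<^bsub>BijGroup Q\<^esub> f) (f x) = inv_into Q f (f x)" using e fx by simp
  have 3: "inv_into Q f x \<in> Q" using inv_into_into[of x f Q] im assms(2) by simp
  have 4: "f (inv_into Q f x) = x" using f_inv_into_f[of x f Q] im assms(2) by simp
  have 5: "inv_into Q f (f x) = x" using inv_into_f_f[OF inj assms(2)] .
  show ?thesis using 1 2 3 4 5 by simp
qed

lemma Lt_app: "x \<in> Q \<Longrightarrow> Lt Q op a x = op a x"
  by (simp add: Lt_def)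

lemma inv_Lt_app:
  assumes "quandle Q op" "a \<in> Q" "x \<in> Q"
  shows "(inv\<^bsub>BijGroup Q\<^esub> (Lt Q op a)) x = ldiv Q op a x"
proof -
  let ?i = "(inv\<^bsub>BijGroup Q\<^esub> (Lt Q op a)) x"
  have "?i \<in> Q" "Lt Q op a ?i = x" using B_inv_app[OF Lt_Bij[OF assms(1,2)] assms(3)] by blast+
  hence "op a ?i = x" by (simp add: Lt_app)
  hence "ldiv Q op a x = ?i" using ldiv_op[OF assms(1,2) \<open>?i \<in> Q\<close>] by simp
  thus ?thesis by simp
qed

lemma B_ext:
  assumes "f \<in> carrier (BijGroup Q)" "g \<in> carrier (BijGroup Q)" "\<And>x. x \<in> Q \<Longrightarrow> f x = g x"
  shows "f = g"
proof -
  have "f \<in> extensional Q" "g \<in> extensional Q" using assms by (auto simp: BijGroup_def Bij_def)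
  thus ?thesis using assms(3) extensionalityI by blast
qed

lemma Lt_op:
  assumes q: "quandle Q op" and "x \<in> Q" "y \<in> Q"
  shows "Lt Q op (op x y) = Lt Q op x \<otimes>\<^bsub>BijGroup Q\<^esub> Lt Q op y \<otimes>\<^bsub>BijGroup Q\<^esub> inv\<^bsub>BijGroup Q\<^esub> (Lt Q op x)"
proof -
  interpret B: group "BijGroup Q" by (rule group_BijGroup)
  have Lx: "Lt Q op x \<in> carrier (BijGroup Q)" and Ly: "Lt Q op y \<in> carrier (BijGroup Q)"
    and Lxy: "Lt Q op (op x y) \<in> carrier (BijGroup Q)"
    using Lt_Bij[OF q] assms q_closed[OF q] by blast+
  show ?thesis
  proof (rule B_ext[OF Lxy])
    show "Lt Q op x \<otimes>\<^bsub>BijGroup Q\<^esub> Lt Q op y \<otimes>\<^bsub>BijGroup Q\<^esub> inv\<^bsub>BijGroup Q\<^esub> Lt Q op x \<in> carrier (BijGroup Q)"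
      using Lx Ly by simp
    fix z assume z: "z \<in> Q"
    have w: "ldiv Q op x z \<in> Q" "op x (ldiv Q op x z) = z" using ldiv_prop[OF q assms(2) z] by blast+
    have "(Lt Q op x \<otimes>\<^bsub>BijGroup Q\<^esub> Lt Q op y \<otimes>\<^bsub>BijGroup Q\<^esub> inv\<^bsub>BijGroup Q\<^esub> Lt Q op x) z
        = op x (op y (ldiv Q op x z))"
    proof -
      have c1: "Lt Q op x \<otimes>\<^bsub>BijGroup Q\<^esub> Lt Q op y \<in> carrier (BijGroup Q)" using Lx Ly by simp
      have c2: "inv\<^bsub>BijGroup Q\<^esub> Lt Q op x \<in> carrier (BijGroup Q)" using Lx by simp
      have "(Lt Q op x \<otimes>\<^bsub>BijGroup Q\<^esub> Lt Q op y \<otimes>\<^bsub>BijGroup Q\<^esub> inv\<^bsub>BijGroup Q\<^esub> Lt Q op x) z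
          = (Lt Q op x \<otimes>\<^bsub>BijGroup Q\<^esub> Lt Q op y) (ldiv Q op x z)"
        using B_mult[OF c1 c2] z inv_Lt_app[OF q assms(2) z] by simp
      also have "\<dots> = op x (op y (ldiv Q op x z))"
        using B_mult[OF Lx Ly] w(1) q_closed[OF q assms(3) w(1)] by (simp add: Lt_app)
      finally show ?thesis .
    qed
    also have "\<dots> = op (op x y) z" using q_dist[OF q assms(2,3) w(1)] w(2) by simp
    finally show "Lt Q op (op x y) z = (Lt Q op x \<otimes>\<^bsub>BijGroup Q\<^esub> Lt Q op y \<otimes>\<^bsub>BijGroup Q\<^esub> inv\<^bsub>BijGroup Q\<^esub> Lt Q op x) z"
      using z by (simp add: Lt_app)
  qed
qed



lemma (in group) cancel_a: "x \<in> carrier G \<Longrightarrow> y \<in> carrier G \<Longrightarrow> inv x \<otimes> (x \<otimes> y) = y"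
  by (simp add: m_assoc[symmetric])
lemma (in group) cancel_b: "x \<in> carrier G \<Longrightarrow> y \<in> carrier G \<Longrightarrow> x \<otimes> (inv x \<otimes> y) = y"
  by (simp add: m_assoc[symmetric])

lemma (in group) grp_id:
  assumes "A \<in> carrier G" "B \<in> carrier G" "C \<in> carrier G"
  shows "(A \<otimes> B \<otimes> inv A) \<otimes> inv (A \<otimes> C \<otimes> inv A) \<otimes> (A \<otimes> inv C)
       = (A \<otimes> inv (B \<otimes> C \<otimes> inv B)) \<otimes> (B \<otimes> inv C)"
  using assms by (simp add: inv_mult_group m_assoc cancel_a cancel_b)

lemma cls_rep: "equiv Q \<alpha> \<Longrightarrow> x \<in> Q \<Longrightarrow> (x, SOME u. u \<in> \<alpha> `` {x}) \<in> \<alpha>"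
proof -
  assume e: "equiv Q \<alpha>" and x: "x \<in> Q"
  have "x \<in> \<alpha> `` {x}" using e x by (meson Image_singleton_iff equiv_def refl_onD)
  hence "(SOME u. u \<in> \<alpha> `` {x}) \<in> \<alpha> `` {x}" by (rule someI)
  thus ?thesis by simp
qed

lemma cong_equiv: "congruence Q op \<alpha> \<Longrightarrow> equiv Q \<alpha>"
  by (simp add: congruence_def)

lemma cong_op: "congruence Q op \<alpha> \<Longrightarrow> (x, x') \<in> \<alpha> \<Longrightarrow> (y, y') \<in> \<alpha> \<Longrightarrow> (op x y, op x' y') \<in> \<alpha>"
  by (simp add: congruence_def)

lemma cong_ldiv: "congruence Q op \<alpha> \<Longrightarrow> (x, x') \<in> \<alpha> \<Longrightarrow> (y, y') \<in> \<alpha> \<Longrightarrow> (ldiv Q op x y, ldiv Q op x' y') \<in> \<alpha>"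
  by (simp add: congruence_def)

lemma quot_op_cls:
  assumes c: "congruence Q op \<alpha>" and x: "x \<in> Q" and y: "y \<in> Q"
  shows "quot_op Q op \<alpha> (\<alpha> `` {x}) (\<alpha> `` {y}) = \<alpha> `` {op x y}"
proof -
  have e: "equiv Q \<alpha>" using c by (rule cong_equiv)
  have "(x, SOME u. u \<in> \<alpha> `` {x}) \<in> \<alpha>" "(y, SOME u. u \<in> \<alpha> `` {y}) \<in> \<alpha>"
    using cls_rep[OF e] x y by blast+
  hence "(op x y, op (SOME u. u \<in> \<alpha> `` {x}) (SOME u. u \<in> \<alpha> `` {y})) \<in> \<alpha>"
    using cong_op[OF c] by blast
  hence "\<alpha> `` {op (SOME u. u \<in> \<alpha> `` {x}) (SOME u. u \<in> \<alpha> `` {y})} = \<alpha> `` {op x y}"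
    using equiv_class_eq[OF e] by (metis)
  thus ?thesis by (simp add: quot_op_def)
qed

lemma core:
  fixes K :: "('k, 'm) monoid_scheme" and \<phi> :: "'a \<Rightarrow> 'k"
  assumes q: "quandle Q op" and c: "congruence Q op \<alpha>"
    and sc: "simply_connected (Q // \<alpha>) (quot_op Q op \<alpha>)"
    and grp: "group K" and fin: "finite (carrier K)"
    and \<phi>c: "\<forall>x\<in>Q. \<phi> x \<in> carrier K" and \<phi>\<alpha>: "\<forall>x y. (x, y) \<in> \<alpha> \<longrightarrow> \<phi> x = \<phi> y"
    and \<phi>op: "\<forall>x\<in>Q. \<forall>y\<in>Q. \<phi> (op x y) = \<phi> x \<otimes>\<^bsub>K\<^esub> \<phi> y \<otimes>\<^bsub>K\<^esub> inv\<^bsub>K\<^esub> \<phi> x"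
  shows "\<exists>e. (\<forall>x\<in>Q. e x \<in> carrier K) \<and> (\<forall>x y. (x, y) \<in> \<alpha> \<longrightarrow> e x = e y) \<and>
            (\<forall>a\<in>Q. \<forall>w\<in>Q. e (op a w) = \<phi> a \<otimes>\<^bsub>K\<^esub> inv\<^bsub>K\<^esub> \<phi> w \<otimes>\<^bsub>K\<^esub> e w)"
proof -
  interpret K: group K by (rule grp)
  have eq: "equiv Q \<alpha>" using c by (rule cong_equiv)
  define \<psi> where "\<psi> A = \<phi> (SOME u. u \<in> A)" for A
  have \<psi>cls: "\<psi> (\<alpha> `` {x}) = \<phi> x" if "x \<in> Q" for x
    using cls_rep[OF eq that] \<phi>\<alpha> unfolding \<psi>_def by metis
  obtain f :: "'k \<Rightarrow> nat" and n where fim: "f ` carrier K = {i. i < n}" and finj: "inj_on f (carrier K)"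
    using finite_imp_inj_to_nat_seg[OF fin] by blast
  define S where "S = f ` carrier K"
  define g where "g = inv_into (carrier K) f"
  have gS: "g m \<in> carrier K" "f (g m) = m" if "m \<in> S" for m
    using that unfolding S_def g_def by (auto intro: inv_into_into f_inv_into_f)
  have gf: "g (f k) = k" if "k \<in> carrier K" for k
    using that finj unfolding g_def by (simp add: inv_into_f_f)
  have fS: "f k \<in> S" if "k \<in> carrier K" for k using that unfolding S_def by simp
  define lm where "lm k = (\<lambda>m\<in>S. f (k \<otimes>\<^bsub>K\<^esub> g m))" for k
  have lm_app: "lm k m = f (k \<otimes>\<^bsub>K\<^esub> g m)" if "m \<in> S" for k m using that by (simp add: lm_def)
  have lm_S: "lm k m \<in> S" if "k \<in> carrier K" "m \<in> S" for k m
    using that gS fS by (simp add: lm_app)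
  have lm_Bij: "lm k \<in> carrier (BijGroup S)" if k: "k \<in> carrier K" for k
  proof -
    have "bij_betw (lm k) S S"
    proof (rule bij_betw_byWitness[where f'="lm (inv\<^bsub>K\<^esub> k)"])
      show "\<forall>a\<in>S. lm (inv\<^bsub>K\<^esub> k) (lm k a) = a"
        using k gS gf lm_S by (simp add: lm_app K.cancel_a)
      show "\<forall>a\<in>S. lm k (lm (inv\<^bsub>K\<^esub> k) a) = a"
        using k gS gf lm_S by (simp add: lm_app K.cancel_b)
      show "lm k ` S \<subseteq> S" using lm_S k by blast
      show "lm (inv\<^bsub>K\<^esub> k) ` S \<subseteq> S" using lm_S k by blast
    qed
    moreover have "lm k \<in> extensional S" by (simp add: lm_def)
    ultimately show ?thesis by (simp add: BijGroup_def Bij_def)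
  qed
  have lm_mult: "lm k \<otimes>\<^bsub>BijGroup S\<^esub> lm k' = lm (k \<otimes>\<^bsub>K\<^esub> k')"
    if "k \<in> carrier K" "k' \<in> carrier K" for k k'
  proof -
    have "lm k \<otimes>\<^bsub>BijGroup S\<^esub> lm k' = (\<lambda>m\<in>S. lm k (lm k' m))"
      using B_mult lm_Bij that by blast
    also have "\<dots> = lm (k \<otimes>\<^bsub>K\<^esub> k')"
      unfolding lm_def using that gS gf fS by (auto simp: K.m_assoc intro!: restrict_ext)
    finally show ?thesis .
  qed
  have lm_one: "lm \<one>\<^bsub>K\<^esub> = \<one>\<^bsub>BijGroup S\<^esub>"
    unfolding B_one lm_def using gS by (auto intro!: restrict_ext)
  define \<theta> where "\<theta> A B = lm (\<psi> A \<otimes>\<^bsub>K\<^esub> inv\<^bsub>K\<^esub> \<psi> B)" for A B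
  have clsE: "\<exists>x\<in>Q. A = \<alpha> `` {x}" if "A \<in> Q // \<alpha>" for A
    using that by (auto elim: quotientE)
  have \<psi>c: "\<psi> A \<in> carrier K" if "A \<in> Q // \<alpha>" for A
    using clsE[OF that] \<psi>cls \<phi>c by auto
  have coc: "quandle_cocycle (Q // \<alpha>) (quot_op Q op \<alpha>) S \<theta>"
    unfolding quandle_cocycle_def
  proof (intro conjI ballI)
    fix A B assume "A \<in> Q // \<alpha>" "B \<in> Q // \<alpha>"
    thus "\<theta> A B \<in> carrier (BijGroup S)" unfolding \<theta>_def using \<psi>c lm_Bij by simp
  next
    fix A assume "A \<in> Q // \<alpha>"
    thus "\<theta> A A = \<one>\<^bsub>BijGroup S\<^esub>" unfolding \<theta>_def using \<psi>c lm_one by simp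
  next
    fix A B C assume "A \<in> Q // \<alpha>" "B \<in> Q // \<alpha>" "C \<in> Q // \<alpha>"
    then obtain a b c where abc: "a \<in> Q" "b \<in> Q" "c \<in> Q" and
      A: "A = \<alpha> `` {a}" and B: "B = \<alpha> `` {b}" and C: "C = \<alpha> `` {c}" using clsE by metis
    have ab: "op a b \<in> Q" and ac: "op a c \<in> Q" and bc: "op b c \<in> Q" using q_closed[OF q] abc by blast+
    have ca: "\<phi> a \<in> carrier K" and cb: "\<phi> b \<in> carrier K" and cc: "\<phi> c \<in> carrier K"
      using \<phi>c abc by blast+
    have L: "\<theta> (quot_op Q op \<alpha> A B) (quot_op Q op \<alpha> A C) \<otimes>\<^bsub>BijGroup S\<^esub> \<theta> A C
        = lm ((\<phi> a \<otimes>\<^bsub>K\<^esub> \<phi> b \<otimes>\<^bsub>K\<^esub> inv\<^bsub>K\<^esub> \<phi> a) \<otimes>\<^bsub>K\<^esub> inv\<^bsub>K\<^esub> (\<phi> a \<otimes>\<^bsub>K\<^esub> \<phi> c \<otimes>\<^bsub>K\<^esub> inv\<^bsub>K\<^esub> \<phi> a) \<otimes>\<^bsub>K\<^esub> (\<phi> a \<otimes>\<^bsub>K\<^esub> inv\<^bsub>K\<^esub> \<phi> c))"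
      unfolding \<theta>_def A B C quot_op_cls[OF c abc(1,2)] quot_op_cls[OF c abc(1,3)]
        \<psi>cls[OF ab] \<psi>cls[OF ac] \<psi>cls[OF abc(1)] \<psi>cls[OF abc(3)] \<phi>op[rule_format, OF abc(1,2)]
        \<phi>op[rule_format, OF abc(1,3)]
      using ca cb cc by (simp add: lm_mult)
    have R: "\<theta> A (quot_op Q op \<alpha> B C) \<otimes>\<^bsub>BijGroup S\<^esub> \<theta> B C
        = lm ((\<phi> a \<otimes>\<^bsub>K\<^esub> inv\<^bsub>K\<^esub> (\<phi> b \<otimes>\<^bsub>K\<^esub> \<phi> c \<otimes>\<^bsub>K\<^esub> inv\<^bsub>K\<^esub> \<phi> b)) \<otimes>\<^bsub>K\<^esub> (\<phi> b \<otimes>\<^bsub>K\<^esub> inv\<^bsub>K\<^esub> \<phi> c))"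
      unfolding \<theta>_def A B C quot_op_cls[OF c abc(2,3)]
        \<psi>cls[OF bc] \<psi>cls[OF abc(1)] \<psi>cls[OF abc(2)] \<psi>cls[OF abc(3)] \<phi>op[rule_format, OF abc(2,3)]
      using ca cb cc by (simp add: lm_mult)
    show "\<theta> (quot_op Q op \<alpha> A B) (quot_op Q op \<alpha> A C) \<otimes>\<^bsub>BijGroup S\<^esub> \<theta> A C =
          \<theta> A (quot_op Q op \<alpha> B C) \<otimes>\<^bsub>BijGroup S\<^esub> \<theta> B C"
      unfolding L R using K.grp_id[OF ca cb cc] by simp
  qed
  have "cohomologous_trivial (Q // \<alpha>) (quot_op Q op \<alpha>) S \<theta>"
    using sc coc unfolding simply_connected_def by blast
  then obtain \<gamma> where \<gamma>c: "\<forall>A\<in>Q // \<alpha>. \<gamma> A \<in> carrier (BijGroup S)"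
    and \<gamma>eq: "\<forall>A\<in>Q // \<alpha>. \<forall>B\<in>Q // \<alpha>. \<theta> A B = \<gamma> (quot_op Q op \<alpha> A B) \<otimes>\<^bsub>BijGroup S\<^esub> inv\<^bsub>BijGroup S\<^esub> (\<gamma> B)"
    unfolding cohomologous_trivial_def by blast
  interpret BS: group "BijGroup S" by (rule group_BijGroup)
  define e where "e x = g (\<gamma> (\<alpha> `` {x}) (f \<one>\<^bsub>K\<^esub>))" for x
  have f1: "f \<one>\<^bsub>K\<^esub> \<in> S" using fS by simp
  have cq: "\<alpha> `` {x} \<in> Q // \<alpha>" if "x \<in> Q" for x using that by (rule quotientI)
  have \<gamma>S: "\<gamma> (\<alpha> `` {x}) (f \<one>\<^bsub>K\<^esub>) \<in> S" if "x \<in> Q" for x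
    using B_app[OF \<gamma>c[rule_format, OF cq[OF that]] f1] .
  show ?thesis
  proof (intro exI[of _ e] conjI ballI allI impI)
    fix x assume "x \<in> Q" thus "e x \<in> carrier K" unfolding e_def using gS \<gamma>S by blast
  next
    fix x y assume "(x, y) \<in> \<alpha>"
    hence "\<alpha> `` {x} = \<alpha> `` {y}" using equiv_class_eq[OF eq] by blast
    thus "e x = e y" unfolding e_def by simp
  next
    fix a w assume a: "a \<in> Q" and w: "w \<in> Q"
    have aw: "op a w \<in> Q" using q_closed[OF q a w] .
    have g1: "\<gamma> (\<alpha> `` {op a w}) \<in> carrier (BijGroup S)" "\<gamma> (\<alpha> `` {w}) \<in> carrier (BijGroup S)"
      using \<gamma>c cq aw w by blast+
    have k: "\<phi> a \<otimes>\<^bsub>K\<^esub> inv\<^bsub>K\<^esub> \<phi> w \<in> carrier K" using \<phi>c a w by simp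
    have "\<theta> (\<alpha> `` {a}) (\<alpha> `` {w}) = \<gamma> (\<alpha> `` {op a w}) \<otimes>\<^bsub>BijGroup S\<^esub> inv\<^bsub>BijGroup S\<^esub> (\<gamma> (\<alpha> `` {w}))"
      using \<gamma>eq cq a w quot_op_cls[OF c a w] by metis
    hence "\<theta> (\<alpha> `` {a}) (\<alpha> `` {w}) \<otimes>\<^bsub>BijGroup S\<^esub> \<gamma> (\<alpha> `` {w}) = \<gamma> (\<alpha> `` {op a w})"
      using g1 by (simp add: BS.m_assoc)
    moreover have "\<theta> (\<alpha> `` {a}) (\<alpha> `` {w}) = lm (\<phi> a \<otimes>\<^bsub>K\<^esub> inv\<^bsub>K\<^esub> \<phi> w)"
      unfolding \<theta>_def using \<psi>cls a w by simp
    ultimately have "\<gamma> (\<alpha> `` {op a w}) (f \<one>\<^bsub>K\<^esub>) = lm (\<phi> a \<otimes>\<^bsub>K\<^esub> inv\<^bsub>K\<^esub> \<phi> w) (\<gamma> (\<alpha> `` {w}) (f \<one>\<^bsub>K\<^esub>))"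
      using B_mult[OF lm_Bij[OF k] g1(2)] f1 by (metis restrict_apply')
    also have "\<dots> = f ((\<phi> a \<otimes>\<^bsub>K\<^esub> inv\<^bsub>K\<^esub> \<phi> w) \<otimes>\<^bsub>K\<^esub> e w)"
      unfolding e_def using lm_app \<gamma>S[OF w] by simp
    finally have "e (op a w) = g (f ((\<phi> a \<otimes>\<^bsub>K\<^esub> inv\<^bsub>K\<^esub> \<phi> w) \<otimes>\<^bsub>K\<^esub> e w))"
      unfolding e_def by simp
    also have "\<dots> = \<phi> a \<otimes>\<^bsub>K\<^esub> inv\<^bsub>K\<^esub> \<phi> w \<otimes>\<^bsub>K\<^esub> e w"
      using gf k gS \<gamma>S[OF w] unfolding e_def by simp
    finally show "e (op a w) = \<phi> a \<otimes>\<^bsub>K\<^esub> inv\<^bsub>K\<^esub> \<phi> w \<otimes>\<^bsub>K\<^esub> e w" .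
  qed
qed



lemma (in group) conj_gen:
  assumes gs: "gens \<subseteq> carrier G" and x: "x \<in> carrier G"
    and hyp: "\<forall>h\<in>gens. x \<otimes> h \<otimes> inv x \<in> generate G gens"
    and h: "h \<in> generate G gens"
  shows "x \<otimes> h \<otimes> inv x \<in> generate G gens"
  using h
proof (induction rule: generate.induct)
  case one
  then show ?case using x by (simp add: generate.one)
next
  case (incl h)
  then show ?case using hyp by blast
next
  case (inv h)
  have hc: "h \<in> carrier G" using inv gs by blast
  have "x \<otimes> inv h \<otimes> inv x = inv (x \<otimes> h \<otimes> inv x)"
    using hc x by (simp add: inv_mult_group m_assoc)
  moreover have "x \<otimes> h \<otimes> inv x \<in> generate G gens" using hyp inv by blast
  ultimately show ?case using generate_m_inv_closed[OF gs] by simp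
next
  case (eng h1 h2)
  have c: "h1 \<in> carrier G" "h2 \<in> carrier G" using eng.hyps generate_in_carrier[OF gs] by blast+
  have "x \<otimes> (h1 \<otimes> h2) \<otimes> inv x = (x \<otimes> h1 \<otimes> inv x) \<otimes> (x \<otimes> h2 \<otimes> inv x)"
    using c x by (simp add: m_assoc cancel_a)
  then show ?case using eng.IH generate.eng by metis
qed

lemma pres_gen:
  assumes gs: "gens \<subseteq> carrier (BijGroup Q)" and e: "equiv Q \<alpha>"
    and hyp: "\<forall>h\<in>gens. \<forall>x\<in>Q. (h x, x) \<in> \<alpha>"
    and h: "h \<in> generate (BijGroup Q) gens"
  shows "\<forall>x\<in>Q. (h x, x) \<in> \<alpha>"
  using h
proof (induction rule: generate.induct)
  case one
  then show ?case using e by (simp add: B_one) (meson equiv_def refl_onD)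
next
  case (incl h)
  then show ?case using hyp by blast
next
  case (inv h)
  show ?case
  proof
    fix x assume x: "x \<in> Q"
    have hc: "h \<in> carrier (BijGroup Q)" using inv gs by blast
    let ?y = "(inv\<^bsub>BijGroup Q\<^esub> h) x"
    have "?y \<in> Q" "h ?y = x" using B_inv_app[OF hc x] by blast+
    hence "(x, ?y) \<in> \<alpha>" using hyp inv by metis
    thus "(?y, x) \<in> \<alpha>" using e by (meson equiv_def symD)
  qed
next
  case (eng h1 h2)
  interpret B: group "BijGroup Q" by (rule group_BijGroup)
  have c: "h1 \<in> carrier (BijGroup Q)" "h2 \<in> carrier (BijGroup Q)"
    using eng.hyps B.generate_in_carrier[OF gs] by blast+
  show ?case
  proof
    fix x assume x: "x \<in> Q"
    have "h2 x \<in> Q" using B_app[OF c(2) x] .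
    hence "(h1 (h2 x), h2 x) \<in> \<alpha>" using eng.IH(1) by blast
    moreover have "(h2 x, x) \<in> \<alpha>" using eng.IH(2) x by blast
    ultimately have "(h1 (h2 x), x) \<in> \<alpha>" using e by (meson equiv_def transD)
    thus "((h1 \<otimes>\<^bsub>BijGroup Q\<^esub> h2) x, x) \<in> \<alpha>" using B_mult[OF c] x by simp
  qed
qed

lemma (in group) conj_quot:
  assumes "x \<in> carrier G" "a \<in> carrier G" "b \<in> carrier G"
  shows "x \<otimes> (a \<otimes> inv b) \<otimes> inv x = (x \<otimes> a \<otimes> inv x) \<otimes> inv (x \<otimes> b \<otimes> inv x)"
  using assms by (simp add: inv_mult_group m_assoc cancel_a)

lemma conj_Lt:
  assumes q: "quandle Q op" and "z \<in> Q" "a \<in> Q" "b \<in> Q"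
  shows "Lt Q op z \<otimes>\<^bsub>BijGroup Q\<^esub> (Lt Q op a \<otimes>\<^bsub>BijGroup Q\<^esub> inv\<^bsub>BijGroup Q\<^esub> Lt Q op b) \<otimes>\<^bsub>BijGroup Q\<^esub> inv\<^bsub>BijGroup Q\<^esub> Lt Q op z
       = Lt Q op (op z a) \<otimes>\<^bsub>BijGroup Q\<^esub> inv\<^bsub>BijGroup Q\<^esub> Lt Q op (op z b)"
proof -
  interpret B: group "BijGroup Q" by (rule group_BijGroup)
  show ?thesis
    using Lt_op[OF q assms(2,3)] Lt_op[OF q assms(2,4)] B.conj_quot Lt_Bij[OF q] assms by simp
qed

lemma conj_invLt:
  assumes q: "quandle Q op" and z: "z \<in> Q" and a: "a \<in> Q" and b: "b \<in> Q"
  shows "inv\<^bsub>BijGroup Q\<^esub> Lt Q op z \<otimes>\<^bsub>BijGroup Q\<^esub> (Lt Q op a \<otimes>\<^bsub>BijGroup Q\<^esub> inv\<^bsub>BijGroup Q\<^esub> Lt Q op b) \<otimes>\<^bsub>BijGroup Q\<^esub> inv\<^bsub>BijGroup Q\<^esub> (inv\<^bsub>BijGroup Q\<^esub> Lt Q op z)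
       = Lt Q op (ldiv Q op z a) \<otimes>\<^bsub>BijGroup Q\<^esub> inv\<^bsub>BijGroup Q\<^esub> Lt Q op (ldiv Q op z b)"
proof -
  interpret B: group "BijGroup Q" by (rule group_BijGroup)
  have a': "ldiv Q op z a \<in> Q" "op z (ldiv Q op z a) = a" using ldiv_prop[OF q z a] by blast+
  have b': "ldiv Q op z b \<in> Q" "op z (ldiv Q op z b) = b" using ldiv_prop[OF q z b] by blast+
  have A: "Lt Q op a = Lt Q op z \<otimes>\<^bsub>BijGroup Q\<^esub> Lt Q op (ldiv Q op z a) \<otimes>\<^bsub>BijGroup Q\<^esub> inv\<^bsub>BijGroup Q\<^esub> Lt Q op z"
    using Lt_op[OF q z a'(1)] a'(2) by simp
  have Bq: "Lt Q op b = Lt Q op z \<otimes>\<^bsub>BijGroup Q\<^esub> Lt Q op (ldiv Q op z b) \<otimes>\<^bsub>BijGroup Q\<^esub> inv\<^bsub>BijGroup Q\<^esub> Lt Q op z"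
    using Lt_op[OF q z b'(1)] b'(2) by simp
  have c: "Lt Q op z \<in> carrier (BijGroup Q)" "Lt Q op (ldiv Q op z a) \<in> carrier (BijGroup Q)"
     "Lt Q op (ldiv Q op z b) \<in> carrier (BijGroup Q)" using Lt_Bij[OF q] z a'(1) b'(1) by blast+
  show ?thesis unfolding A Bq using c
    by (simp add: B.inv_mult_group B.m_assoc B.cancel_a)
qed



theorem proposition3p5:
  fixes Q :: "'a set" and op :: "'a \<Rightarrow> 'a \<Rightarrow> 'a" and \<alpha> :: "'a rel"
  assumes "quandle Q op" and "finite Q" and "connected_quandle Q op"
    and "congruence Q op \<alpha>"
    and "simply_connected (Q // \<alpha>) (quot_op Q op \<alpha>)"
  shows "\<alpha> = orbit_rel Q (Dis_rel Q op \<alpha>) \<and> Dis_rel Q op \<alpha> = Dis_up Q op \<alpha>"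
proof -
  note q = assms(1) and fQ = assms(2) and conn = assms(3) and c = assms(4) and sc = assms(5)
  interpret B: group "BijGroup Q" by (rule group_BijGroup)
  have eqv: "equiv Q \<alpha>" using c by (rule cong_equiv)
  have arefl: "(x, x) \<in> \<alpha>" if "x \<in> Q" for x using eqv that by (meson equiv_def refl_onD)
  have asym: "(y, x) \<in> \<alpha>" if "(x, y) \<in> \<alpha>" for x y using eqv that by (meson equiv_def symD)
  have aQ: "x \<in> Q \<and> y \<in> Q" if "(x, y) \<in> \<alpha>" for x y using eqv that
    by (meson equiv_class_eq_iff)
  define gL where "gL = Lt Q op ` Q"
  define gD where "gD = {Lt Q op x \<otimes>\<^bsub>BijGroup Q\<^esub> inv\<^bsub>BijGroup Q\<^esub> (Lt Q op y) | x y. x \<in> Q \<and> y \<in> Q}"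
  define gN where "gN = {Lt Q op x \<otimes>\<^bsub>BijGroup Q\<^esub> inv\<^bsub>BijGroup Q\<^esub> (Lt Q op y) | x y. x \<in> Q \<and> y \<in> Q \<and> (x, y) \<in> \<alpha>}"
  define LG where "LG = LMlt Q op"
  define DQ where "DQ = Dis Q op"
  define N where "N = Dis_rel Q op \<alpha>"
  have LG_gen: "LG = generate (BijGroup Q) gL" unfolding LG_def gL_def LMlt_def ..
  have DQ_gen: "DQ = generate (BijGroup Q) gD" unfolding DQ_def gD_def Dis_def ..
  have N_gen: "N = generate (BijGroup Q) gN" unfolding N_def gN_def Dis_rel_def ..
  have Ltc: "Lt Q op x \<in> carrier (BijGroup Q)" if "x \<in> Q" for x using Lt_Bij[OF q that] .
  have gLc: "gL \<subseteq> carrier (BijGroup Q)" unfolding gL_def using Ltc by blast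
  have gDc: "gD \<subseteq> carrier (BijGroup Q)" unfolding gD_def using Ltc by blast
  have gNgD: "gN \<subseteq> gD" unfolding gN_def gD_def by blast
  have gNc: "gN \<subseteq> carrier (BijGroup Q)" using gNgD gDc by blast
  have LGsub: "subgroup LG (BijGroup Q)" unfolding LG_gen using B.generate_is_subgroup[OF gLc] .
  have LtLG: "Lt Q op x \<in> LG" if "x \<in> Q" for x unfolding LG_gen gL_def using that
    by (simp add: generate.incl)
  have iLtLG: "inv\<^bsub>BijGroup Q\<^esub> (Lt Q op x) \<in> LG" if "x \<in> Q" for x
    using subgroup.m_inv_closed[OF LGsub LtLG[OF that]] .
  have gDLG: "gD \<subseteq> LG" unfolding gD_def using subgroup.m_closed[OF LGsub] LtLG iLtLG by blast
  have DQLG: "DQ \<subseteq> LG" unfolding DQ_gen using B.generate_subgroup_incl[OF gDLG LGsub] .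
  have NDQ: "N \<subseteq> DQ" unfolding N_gen DQ_gen using B.mono_generate[OF gNgD] .
  have NLG: "N \<subseteq> LG" using NDQ DQLG by blast
  have Nsub: "subgroup N (BijGroup Q)" unfolding N_gen using B.generate_is_subgroup[OF gNc] .
  have DQsub: "subgroup DQ (BijGroup Q)" unfolding DQ_gen using B.generate_is_subgroup[OF gDc] .
  have LGc: "LG \<subseteq> carrier (BijGroup Q)" using LGsub subgroup.subset by blast
  have conjN: "\<forall>h\<in>N. x \<otimes>\<^bsub>BijGroup Q\<^esub> h \<otimes>\<^bsub>BijGroup Q\<^esub> inv\<^bsub>BijGroup Q\<^esub> x \<in> N" if "x \<in> LG" for x
  proof -
    have "x \<in> generate (BijGroup Q) gL" using that LG_gen by simp
    thus ?thesis
    proof (induction rule: generate.induct)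
      case one
      then show ?case using Nsub subgroup.subset by fastforce
    next
      case (incl h)
      then obtain z where z: "z \<in> Q" "h = Lt Q op z" unfolding gL_def by blast
      have "\<forall>g\<in>gN. h \<otimes>\<^bsub>BijGroup Q\<^esub> g \<otimes>\<^bsub>BijGroup Q\<^esub> inv\<^bsub>BijGroup Q\<^esub> h \<in> N"
      proof
        fix g assume "g \<in> gN"
        then obtain a b where ab: "a \<in> Q" "b \<in> Q" "(a, b) \<in> \<alpha>"
          and g: "g = Lt Q op a \<otimes>\<^bsub>BijGroup Q\<^esub> inv\<^bsub>BijGroup Q\<^esub> (Lt Q op b)"
          unfolding gN_def by blast
        have "(op z a, op z b) \<in> \<alpha>" using cong_op[OF c arefl[OF z(1)] ab(3)] .
        moreover have "op z a \<in> Q" "op z b \<in> Q" using q_closed[OF q] z ab by blast+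
        ultimately have "Lt Q op (op z a) \<otimes>\<^bsub>BijGroup Q\<^esub> inv\<^bsub>BijGroup Q\<^esub> Lt Q op (op z b) \<in> gN"
          unfolding gN_def by blast
        thus "h \<otimes>\<^bsub>BijGroup Q\<^esub> g \<otimes>\<^bsub>BijGroup Q\<^esub> inv\<^bsub>BijGroup Q\<^esub> h \<in> N"
          unfolding z(2) g conj_Lt[OF q z(1) ab(1,2)] N_gen by (rule generate.incl)
      qed
      thus ?case unfolding N_gen using B.conj_gen[OF gNc Ltc[OF z(1)]] z(2) by blast
    next
      case (inv h)
      then obtain z where z: "z \<in> Q" "h = Lt Q op z" unfolding gL_def by blast
      have "\<forall>g\<in>gN. inv\<^bsub>BijGroup Q\<^esub> h \<otimes>\<^bsub>BijGroup Q\<^esub> g \<otimes>\<^bsub>BijGroup Q\<^esub> inv\<^bsub>BijGroup Q\<^esub> (inv\<^bsub>BijGroup Q\<^esub> h) \<in> N"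
      proof
        fix g assume "g \<in> gN"
        then obtain a b where ab: "a \<in> Q" "b \<in> Q" "(a, b) \<in> \<alpha>"
          and g: "g = Lt Q op a \<otimes>\<^bsub>BijGroup Q\<^esub> inv\<^bsub>BijGroup Q\<^esub> (Lt Q op b)"
          unfolding gN_def by blast
        have "(ldiv Q op z a, ldiv Q op z b) \<in> \<alpha>" using cong_ldiv[OF c arefl[OF z(1)] ab(3)] .
        moreover have "ldiv Q op z a \<in> Q" "ldiv Q op z b \<in> Q" using ldiv_prop[OF q] z ab by blast+
        ultimately have "Lt Q op (ldiv Q op z a) \<otimes>\<^bsub>BijGroup Q\<^esub> inv\<^bsub>BijGroup Q\<^esub> Lt Q op (ldiv Q op z b) \<in> gN"
          unfolding gN_def by blast
        thus "inv\<^bsub>BijGroup Q\<^esub> h \<otimes>\<^bsub>BijGroup Q\<^esub> g \<otimes>\<^bsub>BijGroup Q\<^esub> inv\<^bsub>BijGroup Q\<^esub> (inv\<^bsub>BijGroup Q\<^esub> h) \<in> N"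
          unfolding z(2) g conj_invLt[OF q z(1) ab(1,2)] N_gen by (rule generate.incl)
      qed
      moreover have "inv\<^bsub>BijGroup Q\<^esub> h \<in> carrier (BijGroup Q)" using Ltc[OF z(1)] z(2) by simp
      ultimately show ?case unfolding N_gen using B.conj_gen[OF gNc] by blast
    next
      case (eng x1 x2)
      have c12: "x1 \<in> carrier (BijGroup Q)" "x2 \<in> carrier (BijGroup Q)"
        using eng.hyps B.generate_in_carrier[OF gLc] by blast+
      show ?case
      proof
        fix h assume h: "h \<in> N"
        have hc: "h \<in> carrier (BijGroup Q)" using h Nsub subgroup.subset by blast
        have "x2 \<otimes>\<^bsub>BijGroup Q\<^esub> h \<otimes>\<^bsub>BijGroup Q\<^esub> inv\<^bsub>BijGroup Q\<^esub> x2 \<in> N" using eng.IH(2) h by blast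
        hence "x1 \<otimes>\<^bsub>BijGroup Q\<^esub> (x2 \<otimes>\<^bsub>BijGroup Q\<^esub> h \<otimes>\<^bsub>BijGroup Q\<^esub> inv\<^bsub>BijGroup Q\<^esub> x2) \<otimes>\<^bsub>BijGroup Q\<^esub> inv\<^bsub>BijGroup Q\<^esub> x1 \<in> N"
          using eng.IH(1) by blast
        moreover have "x1 \<otimes>\<^bsub>BijGroup Q\<^esub> (x2 \<otimes>\<^bsub>BijGroup Q\<^esub> h \<otimes>\<^bsub>BijGroup Q\<^esub> inv\<^bsub>BijGroup Q\<^esub> x2) \<otimes>\<^bsub>BijGroup Q\<^esub> inv\<^bsub>BijGroup Q\<^esub> x1
           = (x1 \<otimes>\<^bsub>BijGroup Q\<^esub> x2) \<otimes>\<^bsub>BijGroup Q\<^esub> h \<otimes>\<^bsub>BijGroup Q\<^esub> inv\<^bsub>BijGroup Q\<^esub> (x1 \<otimes>\<^bsub>BijGroup Q\<^esub> x2)"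
          using c12 hc by (simp add: B.m_assoc B.inv_mult_group)
        ultimately show "(x1 \<otimes>\<^bsub>BijGroup Q\<^esub> x2) \<otimes>\<^bsub>BijGroup Q\<^esub> h \<otimes>\<^bsub>BijGroup Q\<^esub> inv\<^bsub>BijGroup Q\<^esub> (x1 \<otimes>\<^bsub>BijGroup Q\<^esub> x2) \<in> N"
          by simp
      qed
    qed
  qed

  define G where "G = (BijGroup Q)\<lparr>carrier := LG\<rparr>"
  have grpG: "group G" unfolding G_def using B.subgroup_imp_group[OF LGsub] .
  have cG: "carrier G = LG" by (simp add: G_def)
  have mG: "\<And>a b. a \<otimes>\<^bsub>G\<^esub> b = a \<otimes>\<^bsub>BijGroup Q\<^esub> b" by (simp add: G_def)
  have oG: "\<one>\<^bsub>G\<^esub> = \<one>\<^bsub>BijGroup Q\<^esub>" by (simp add: G_def)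
  have iG: "inv\<^bsub>G\<^esub> a = inv\<^bsub>BijGroup Q\<^esub> a" if "a \<in> LG" for a
    unfolding G_def using B.m_inv_consistent[OF LGsub that] .
  have NsubG: "subgroup N G" unfolding G_def using B.subgroup_incl[OF Nsub LGsub NLG] .
  have nrm: "N \<lhd> G"
    unfolding group.normal_inv_iff[OF grpG] using NsubG conjN cG mG iG
    by (metis subgroup.m_inv_closed)
  define K where "K = G Mod N"
  define \<pi> where "\<pi> a = N #>\<^bsub>G\<^esub> a" for a
  have grpK: "group K" unfolding K_def using normal.factorgroup_is_group[OF nrm] .
  have homK: "\<pi> \<in> hom G K" unfolding K_def \<pi>_def using normal.r_coset_hom_Mod[OF nrm] .
  interpret pi: group_hom G K \<pi>
    using grpG grpK homK by (simp add: group_hom_def group_hom_axioms_def)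

  have finB: "finite (carrier (BijGroup Q))"
  proof -
    have "carrier (BijGroup Q) \<subseteq> Pi\<^sub>E Q (\<lambda>_. Q)"
      by (auto simp: BijGroup_def Bij_def bij_betw_def PiE_def extensional_def)
    moreover have "finite (Pi\<^sub>E Q (\<lambda>_. Q))" using fQ by (simp add: finite_PiE)
    ultimately show ?thesis by (rule finite_subset)
  qed
  have finK: "finite (carrier K)"
    unfolding K_def carrier_FactGroup cG using finite_subset[OF LGc finB] by simp
  define \<phi> where "\<phi> x = \<pi> (Lt Q op x)" for x
  have \<phi>c: "\<forall>x\<in>Q. \<phi> x \<in> carrier K" unfolding \<phi>_def using LtLG cG pi.hom_closed by metis
  have \<pi>N: "\<pi> h = \<one>\<^bsub>K\<^esub>" if "h \<in> N" for h
    unfolding \<pi>_def K_def one_FactGroup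
    using group.coset_join2[OF grpG _ NsubG that] that NLG cG by blast
  have \<phi>\<alpha>: "\<forall>x y. (x, y) \<in> \<alpha> \<longrightarrow> \<phi> x = \<phi> y"
  proof (intro allI impI)
    fix x y assume xy: "(x, y) \<in> \<alpha>"
    have xQ: "x \<in> Q" and yQ: "y \<in> Q" using aQ[OF xy] by blast+
    have "Lt Q op x \<otimes>\<^bsub>BijGroup Q\<^esub> inv\<^bsub>BijGroup Q\<^esub> (Lt Q op y) \<in> N"
      unfolding N_gen gN_def using xQ yQ xy by (blast intro: generate.incl)
    hence "\<pi> (Lt Q op x \<otimes>\<^bsub>G\<^esub> inv\<^bsub>G\<^esub> (Lt Q op y)) = \<one>\<^bsub>K\<^esub>"
      using \<pi>N mG iG[OF LtLG[OF yQ]] by simp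
    moreover have "\<pi> (Lt Q op x \<otimes>\<^bsub>G\<^esub> inv\<^bsub>G\<^esub> (Lt Q op y)) = \<phi> x \<otimes>\<^bsub>K\<^esub> inv\<^bsub>K\<^esub> \<phi> y"
    proof -
      have a: "Lt Q op x \<in> carrier G" "Lt Q op y \<in> carrier G" using LtLG[OF xQ] LtLG[OF yQ] cG by auto
      show ?thesis unfolding \<phi>_def using pi.hom_mult[OF a(1) group.inv_closed[OF grpG a(2)]] pi.hom_inv[OF a(2)] by simp
    qed
    ultimately have "\<phi> x \<otimes>\<^bsub>K\<^esub> inv\<^bsub>K\<^esub> \<phi> y = \<one>\<^bsub>K\<^esub>" by simp
    thus "\<phi> x = \<phi> y" using \<phi>c xQ yQ by (metis group.inv_equality[OF grpK] group.inv_inv[OF grpK] group.inv_closed[OF grpK])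
  qed
  have \<phi>op: "\<forall>x\<in>Q. \<forall>y\<in>Q. \<phi> (op x y) = \<phi> x \<otimes>\<^bsub>K\<^esub> \<phi> y \<otimes>\<^bsub>K\<^esub> inv\<^bsub>K\<^esub> \<phi> x"
  proof (intro ballI)
    fix x y assume xQ: "x \<in> Q" and yQ: "y \<in> Q"
    have "Lt Q op (op x y) = Lt Q op x \<otimes>\<^bsub>G\<^esub> Lt Q op y \<otimes>\<^bsub>G\<^esub> inv\<^bsub>G\<^esub> (Lt Q op x)"
      using Lt_op[OF q xQ yQ] mG iG[OF LtLG[OF xQ]] by simp
    moreover have a: "Lt Q op x \<in> carrier G" "Lt Q op y \<in> carrier G" using LtLG[OF xQ] LtLG[OF yQ] cG by auto
    ultimately show "\<phi> (op x y) = \<phi> x \<otimes>\<^bsub>K\<^esub> \<phi> y \<otimes>\<^bsub>K\<^esub> inv\<^bsub>K\<^esub> \<phi> x"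
      unfolding \<phi>_def using pi.hom_mult[OF monoid.m_closed[OF group.is_monoid[OF grpG] a] group.inv_closed[OF grpG a(1)]] pi.hom_mult[OF a] pi.hom_inv[OF a(1)] by simp
  qed
  obtain e where ec: "\<forall>x\<in>Q. e x \<in> carrier K" and e\<alpha>: "\<forall>x y. (x, y) \<in> \<alpha> \<longrightarrow> e x = e y"
    and eop: "\<forall>a\<in>Q. \<forall>w\<in>Q. e (op a w) = \<phi> a \<otimes>\<^bsub>K\<^esub> inv\<^bsub>K\<^esub> \<phi> w \<otimes>\<^bsub>K\<^esub> e w"
    using core[OF q c sc grpK finK \<phi>c \<phi>\<alpha> \<phi>op] by blast

  have \<pi>ab: "\<pi> (Lt Q op a \<otimes>\<^bsub>BijGroup Q\<^esub> inv\<^bsub>BijGroup Q\<^esub> (Lt Q op b)) = \<phi> a \<otimes>\<^bsub>K\<^esub> inv\<^bsub>K\<^esub> \<phi> b"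
    if aQ': "a \<in> Q" and bQ': "b \<in> Q" for a b
  proof -
    have a: "Lt Q op a \<in> carrier G" "Lt Q op b \<in> carrier G" using LtLG[OF aQ'] LtLG[OF bQ'] cG by auto
    show ?thesis unfolding \<phi>_def using pi.hom_mult[OF a(1) group.inv_closed[OF grpG a(2)]] pi.hom_inv[OF a(2)]
      mG iG[OF LtLG[OF bQ']] by simp
  qed
  have app_ab: "(Lt Q op a \<otimes>\<^bsub>BijGroup Q\<^esub> inv\<^bsub>BijGroup Q\<^esub> (Lt Q op b)) z = op a (ldiv Q op b z)"
    if "a \<in> Q" "b \<in> Q" "z \<in> Q" for a b z
  proof -
    have "(Lt Q op a \<otimes>\<^bsub>BijGroup Q\<^esub> inv\<^bsub>BijGroup Q\<^esub> (Lt Q op b)) z = Lt Q op a ((inv\<^bsub>BijGroup Q\<^esub> (Lt Q op b)) z)"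
      using B_mult[OF Ltc[OF that(1)] B.inv_closed[OF Ltc[OF that(2)]]] that(3) by simp
    also have "\<dots> = op a (ldiv Q op b z)" using inv_Lt_app[OF q that(2,3)] ldiv_prop[OF q that(2,3)] Lt_app by metis
    finally show ?thesis .
  qed
  have \<pi>c: "\<pi> h \<in> carrier K" if "h \<in> LG" for h using pi.hom_closed that cG by blast
  have claim_gen: "e (h z) = \<pi> h \<otimes>\<^bsub>K\<^esub> e z" if h: "h \<in> gD" and z: "z \<in> Q" for h z
  proof -
    obtain a b where ab: "a \<in> Q" "b \<in> Q" and hd: "h = Lt Q op a \<otimes>\<^bsub>BijGroup Q\<^esub> inv\<^bsub>BijGroup Q\<^esub> (Lt Q op b)"
      using h unfolding gD_def by blast
    define w where "w = ldiv Q op b z"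
    have w: "w \<in> Q" "op b w = z" using ldiv_prop[OF q ab(2) z] unfolding w_def by blast+
    have "e (h z) = e (op a w)" unfolding hd app_ab[OF ab z] w_def ..
    also have "\<dots> = \<phi> a \<otimes>\<^bsub>K\<^esub> inv\<^bsub>K\<^esub> \<phi> w \<otimes>\<^bsub>K\<^esub> e w" using eop ab w by blast
    also have "\<dots> = (\<phi> a \<otimes>\<^bsub>K\<^esub> inv\<^bsub>K\<^esub> \<phi> b) \<otimes>\<^bsub>K\<^esub> (\<phi> b \<otimes>\<^bsub>K\<^esub> inv\<^bsub>K\<^esub> \<phi> w \<otimes>\<^bsub>K\<^esub> e w)"
      using \<phi>c ec ab w by (simp add: group.cancel_a[OF grpK] monoid.m_assoc[OF group.is_monoid[OF grpK]])
    also have "\<phi> b \<otimes>\<^bsub>K\<^esub> inv\<^bsub>K\<^esub> \<phi> w \<otimes>\<^bsub>K\<^esub> e w = e z" using eop ab w by metis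
    finally show ?thesis unfolding hd \<pi>ab[OF ab] .
  qed
  have claim: "\<forall>z\<in>Q. e (d z) = \<pi> d \<otimes>\<^bsub>K\<^esub> e z" if d: "d \<in> DQ" for d
  proof -
    have "d \<in> generate (BijGroup Q) gD" using d DQ_gen by simp
    thus ?thesis
    proof (induction rule: generate.induct)
      case one
      have "\<pi> \<one>\<^bsub>BijGroup Q\<^esub> = \<one>\<^bsub>K\<^esub>" using pi.hom_one oG by simp
      have o: "\<And>z. z \<in> Q \<Longrightarrow> \<one>\<^bsub>BijGroup Q\<^esub> z = z" by (simp add: B_one)
      show ?case using ec \<open>\<pi> \<one>\<^bsub>BijGroup Q\<^esub> = \<one>\<^bsub>K\<^esub>\<close> o by (simp add: monoid.l_one[OF group.is_monoid[OF grpK]])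
    next
      case (incl h)
      then show ?case using claim_gen by blast
    next
      case (inv h)
      have hc: "h \<in> carrier (BijGroup Q)" and hL: "h \<in> LG" using inv gDc gDLG by blast+
      show ?case
      proof
        fix z assume z: "z \<in> Q"
        define z' where "z' = (inv\<^bsub>BijGroup Q\<^esub> h) z"
        have z': "z' \<in> Q" "h z' = z" using B_inv_app[OF hc z] unfolding z'_def by blast+
        have "e z = \<pi> h \<otimes>\<^bsub>K\<^esub> e z'" using claim_gen[OF inv z'(1)] z'(2) by simp
        moreover have "\<pi> (inv\<^bsub>BijGroup Q\<^esub> h) = inv\<^bsub>K\<^esub> \<pi> h" using pi.hom_inv[of h] hL cG iG by simp
        ultimately show "e ((inv\<^bsub>BijGroup Q\<^esub> h) z) = \<pi> (inv\<^bsub>BijGroup Q\<^esub> h) \<otimes>\<^bsub>K\<^esub> e z"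
          unfolding z'_def[symmetric] using \<pi>c[OF hL] ec z'(1) by (simp add: group.cancel_a[OF grpK])
      qed
    next
      case (eng h1 h2)
      have h12: "h1 \<in> DQ" "h2 \<in> DQ" using eng.hyps DQ_gen by simp_all
      have c12: "h1 \<in> carrier (BijGroup Q)" "h2 \<in> carrier (BijGroup Q)" using h12 DQLG LGc by blast+
      have L12: "h1 \<in> carrier G" "h2 \<in> carrier G" using h12 DQLG cG by blast+
      show ?case
      proof
        fix z assume z: "z \<in> Q"
        have h2z: "h2 z \<in> Q" using B_app[OF c12(2) z] .
        have "e ((h1 \<otimes>\<^bsub>BijGroup Q\<^esub> h2) z) = e (h1 (h2 z))" using B_mult[OF c12] z by simp
        also have "\<dots> = \<pi> h1 \<otimes>\<^bsub>K\<^esub> (\<pi> h2 \<otimes>\<^bsub>K\<^esub> e z)" using eng.IH h2z z by simp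
        also have "\<dots> = \<pi> (h1 \<otimes>\<^bsub>BijGroup Q\<^esub> h2) \<otimes>\<^bsub>K\<^esub> e z"
          using pi.hom_mult[OF L12] mG \<pi>c h12 DQLG ec z
          by (simp add: monoid.m_assoc[OF group.is_monoid[OF grpK]] subset_iff)
        finally show "e ((h1 \<otimes>\<^bsub>BijGroup Q\<^esub> h2) z) = \<pi> (h1 \<otimes>\<^bsub>BijGroup Q\<^esub> h2) \<otimes>\<^bsub>K\<^esub> e z" .
      qed
    qed
  qed
  have key: "d \<in> N" if d: "d \<in> DQ" and z: "z \<in> Q" and dz: "(d z, z) \<in> \<alpha>" for d z
  proof -
    have dL: "d \<in> LG" using d DQLG by blast
    have "\<pi> d \<otimes>\<^bsub>K\<^esub> e z = e z" using claim[OF d] z e\<alpha> dz by metis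
    hence "\<pi> d = \<one>\<^bsub>K\<^esub>" using group.r_cancel_one[OF grpK] ec z \<pi>c[OF dL] by blast
    hence "N #>\<^bsub>G\<^esub> d = N" unfolding \<pi>_def K_def by simp
    moreover have "d \<in> N #>\<^bsub>G\<^esub> d" using group.rcos_self[OF grpG _ NsubG] dL cG by blast
    ultimately show ?thesis by simp
  qed

  have gD_in: "Lt Q op a \<otimes>\<^bsub>BijGroup Q\<^esub> inv\<^bsub>BijGroup Q\<^esub> (Lt Q op b) \<in> DQ" if "a \<in> Q" "b \<in> Q" for a b
    unfolding DQ_gen gD_def using that by (blast intro: generate.incl)
  have conn_D: "\<forall>p\<in>Q. \<exists>d\<in>DQ. g p = d p" if g: "g \<in> LG" for g
  proof -
    have "g \<in> generate (BijGroup Q) gL" using g LG_gen by simp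
    thus ?thesis
    proof (induction rule: generate.induct)
      case one
      then show ?case using subgroup.one_closed[OF DQsub] by blast
    next
      case (incl h)
      then obtain z where z: "z \<in> Q" "h = Lt Q op z" unfolding gL_def by blast
      show ?case
      proof
        fix p assume p: "p \<in> Q"
        have "ldiv Q op p p = p" using ldiv_op[OF q p p] q_idem[OF q p] by simp
        hence "(Lt Q op z \<otimes>\<^bsub>BijGroup Q\<^esub> inv\<^bsub>BijGroup Q\<^esub> (Lt Q op p)) p = h p"
          using app_ab[OF z(1) p p] z(2) Lt_app[OF p] by simp
        thus "\<exists>d\<in>DQ. h p = d p" using gD_in[OF z(1) p] by metis
      qed
    next
      case (inv h)
      then obtain z where z: "z \<in> Q" "h = Lt Q op z" unfolding gL_def by blast
      show ?case
      proof
        fix p assume p: "p \<in> Q"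
        define w where "w = ldiv Q op z p"
        have w: "w \<in> Q" using ldiv_prop[OF q z(1) p] w_def by blast
        have "(Lt Q op w \<otimes>\<^bsub>BijGroup Q\<^esub> inv\<^bsub>BijGroup Q\<^esub> (Lt Q op z)) p = w"
          using app_ab[OF w z(1) p] q_idem[OF q w] w_def by simp
        moreover have "(inv\<^bsub>BijGroup Q\<^esub> h) p = w" using inv_Lt_app[OF q z(1) p] z(2) w_def by simp
        ultimately show "\<exists>d\<in>DQ. (inv\<^bsub>BijGroup Q\<^esub> h) p = d p" using gD_in[OF w z(1)] by metis
      qed
    next
      case (eng g1 g2)
      have c12: "g1 \<in> carrier (BijGroup Q)" "g2 \<in> carrier (BijGroup Q)"
        using eng.hyps B.generate_in_carrier[OF gLc] by blast+
      show ?case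
      proof
        fix p assume p: "p \<in> Q"
        obtain d2 where d2: "d2 \<in> DQ" "g2 p = d2 p" using eng.IH(2) p by blast
        have p': "g2 p \<in> Q" using B_app[OF c12(2) p] .
        obtain d1 where d1: "d1 \<in> DQ" "g1 (g2 p) = d1 (g2 p)" using eng.IH(1) p' by blast
        have dc: "d1 \<in> carrier (BijGroup Q)" "d2 \<in> carrier (BijGroup Q)" using d1 d2 DQLG LGc by blast+
        have "(g1 \<otimes>\<^bsub>BijGroup Q\<^esub> g2) p = (d1 \<otimes>\<^bsub>BijGroup Q\<^esub> d2) p"
          using B_mult[OF c12] B_mult[OF dc] p d1 d2 by simp
        moreover have "d1 \<otimes>\<^bsub>BijGroup Q\<^esub> d2 \<in> DQ" using subgroup.m_closed[OF DQsub d1(1) d2(1)] .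
        ultimately show "\<exists>d\<in>DQ. (g1 \<otimes>\<^bsub>BijGroup Q\<^esub> g2) p = d p" by metis
      qed
    qed
  qed
  have presN: "\<forall>x\<in>Q. (h x, x) \<in> \<alpha>" if h: "h \<in> N" for h
  proof (rule pres_gen[OF gNc eqv])
    show "h \<in> generate (BijGroup Q) gN" using h N_gen by simp
    show "\<forall>h\<in>gN. \<forall>x\<in>Q. (h x, x) \<in> \<alpha>"
    proof (intro ballI)
      fix g x assume g: "g \<in> gN" and x: "x \<in> Q"
      then obtain a b where ab: "a \<in> Q" "b \<in> Q" "(a, b) \<in> \<alpha>"
        and gd: "g = Lt Q op a \<otimes>\<^bsub>BijGroup Q\<^esub> inv\<^bsub>BijGroup Q\<^esub> (Lt Q op b)"
        unfolding gN_def by blast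
      have w: "ldiv Q op b x \<in> Q" "op b (ldiv Q op b x) = x" using ldiv_prop[OF q ab(2) x] by blast+
      have "(op a (ldiv Q op b x), op b (ldiv Q op b x)) \<in> \<alpha>" using cong_op[OF c ab(3) arefl[OF w(1)]] .
      thus "(g x, x) \<in> \<alpha>" using gd app_ab[OF ab(1,2) x] w(2) by simp
    qed
  qed
  have part1: "\<alpha> = orbit_rel Q N"
  proof
    show "\<alpha> \<subseteq> orbit_rel Q N"
    proof
      fix pr assume pr: "pr \<in> \<alpha>"
      then obtain x y where xy: "pr = (x, y)" "(x, y) \<in> \<alpha>" by (cases pr) auto
      have xQ: "x \<in> Q" and yQ: "y \<in> Q" using aQ[OF xy(2)] by blast+
      obtain g where g: "g \<in> LG" "g x = y" using conn xQ yQ unfolding connected_quandle_def LG_def by blast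
      obtain d where d: "d \<in> DQ" "g x = d x" using conn_D[OF g(1)] xQ by blast
      have "(d x, x) \<in> \<alpha>" using asym xy(2) g(2) d(2) by simp
      hence "d \<in> N" using key[OF d(1) xQ] by blast
      thus "pr \<in> orbit_rel Q N" unfolding orbit_rel_def using xy xQ g(2) d(2) by blast
    qed
  next
    show "orbit_rel Q N \<subseteq> \<alpha>"
      unfolding orbit_rel_def using presN asym by blast
  qed
  have part2: "N = Dis_up Q op \<alpha>"
  proof
    show "N \<subseteq> Dis_up Q op \<alpha>"
      unfolding Dis_up_def LMlt_up_def using NLG NDQ presN LG_def DQ_def by blast
  next
    show "Dis_up Q op \<alpha> \<subseteq> N"
    proof
      fix h assume h: "h \<in> Dis_up Q op \<alpha>"
      hence hD: "h \<in> DQ" and hp: "\<forall>x\<in>Q. (h x, x) \<in> \<alpha>"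
        unfolding Dis_up_def LMlt_up_def DQ_def by blast+
      show "h \<in> N"
      proof (cases "Q = {}")
        case True
        hence "gD = gN" unfolding gD_def gN_def by simp
        thus ?thesis using hD DQ_gen N_gen by simp
      next
        case False
        then obtain z where z: "z \<in> Q" by blast
        thus ?thesis using key[OF hD z] hp by blast
      qed
    qed
  qed
  show ?thesis using part1 part2 unfolding N_def by simp
qed

end
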